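(* Let $T=0$, $\epsilon>0$ admissible, and let $\mathbf X(t)=\mathbf X^{(\epsilon)}(t)$ be the Markov chain on $\mathbb N^{n_\epsilon}$ of the context. Assume $$\lambda<\frac{C}{L\ln(2)\,\epsilon^2\sum_{k=0}^{n_\epsilon-1}l_\epsilon(a_k,0)},\qquad\text{and set}\qquad \tau=\Big(\frac{C}{L\ln(2)\sum_{k=0}^{n_\epsilon-1}l_\epsilon(a_k,0)}-\lambda\epsilon^2\Big)^{-1}>0.$$ Then, writing $\mathbb E_x$ for expectation when $\mathbf X(0)=x$, $$\lim_{\|x\|_\infty\to\infty}\frac{1}{\|x\|_\infty}\,\mathbb E_x\big[\|\mathbf X(\|x\|_\infty\tau)\|_\infty\big]=0.$$
   Context: Setting ($T=0$). $\mathbf S=[-Q,Q]^2$ with opposite edges identified (flat torus), torus distance $\|\cdot\|$. Path-loss $l:[0,\infty)\to[0,\infty)$ bounded, non-increasing, $l(0)=1$; noise $\mathcal N_0>0$; constants $C>0$, $L>0$, $\lambda>0$. Discretization: $\epsilon>0$ is admissible if $2Q/\epsilon$ is an integer; tessellate $\mathbf S$ into $n_\epsilon=(2Q/\epsilon)^2$ squares $A_0,\dots,A_{n_\epsilon-1}$ of side $\epsilon$ with centers $a_i$ and $a_0=0$. Define $l_\epsilon(a_i,a_j)=\sup\{l(\|b-b'\|): b\in\overline{A_i},\,b'\in\overline{A_j}\}$. The chain $\mathbf X$ on $\mathbb N^{n_\epsilon}$ has transitions: for each $i$, $X_i\to X_i+1$ at rate $\lambda\epsilon^2$, and $X_i\to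 X_i-1$ at rate $\frac{C}{L}X_i\log_2\!\Big(1+\frac{1}{\mathcal N_0+\sum_{j}(X_j-\mathbf 1\{j=i\})\,l_\epsilon(a_i,a_j)}\Big)$. *)

theory Defs
  imports "HOL-Analysis.Analysis"
begin

type_synonym idx = "nat \<times> nat"
type_synonym state = "idx \<Rightarrow> nat"

text \<open>Index set of the tessellation: cell (p,q), 0 <= p,q < m, where m = 2Q/eps,
  so n_eps = m^2 cells; cell (0,0) is the one centred at the origin (a_0 = 0).\<close>
definition cells :: "nat \<Rightarrow> idx set" where
  "cells m = {0..<m} \<times> {0..<m}"

text \<open>Distance on the flat torus [-Q,Q]^2 (opposite edges identified).\<close>
definition tdist :: "real \<Rightarrow> real \<times> real \<Rightarrow> real \<times> real \<Rightarrow> real" where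
  "tdist Q b b' = Inf {norm (b - b' + (2 * Q * of_int k1, 2 * Q * of_int k2)) | k1 k2 :: int. True}"

text \<open>Closed square of side eps with centre a_(p,q) = (p eps, q eps) (taken modulo the torus).\<close>
definition cell :: "real \<Rightarrow> idx \<Rightarrow> (real \<times> real) set" where
  "cell eps i = cbox (real (fst i) * eps - eps / 2, real (snd i) * eps - eps / 2)
                     (real (fst i) * eps + eps / 2, real (snd i) * eps + eps / 2)"

definition leps :: "(real \<Rightarrow> real) \<Rightarrow> real \<Rightarrow> real \<Rightarrow> idx \<Rightarrow> idx \<Rightarrow> real" where
  "leps l Q eps i j = Sup {l (tdist Q b b') | b b'. b \<in> cell eps i \<and> b' \<in> cell eps j}"

definition drate :: "(real \<Rightarrow> real) \<Rightarrow> real \<Rightarrow> real \<Rightarrow> nat \<Rightarrow> real \<Rightarrow> real \<Rightarrow> real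
    \<Rightarrow> state \<Rightarrow> idx \<Rightarrow> real" where
  "drate l Q eps m N0 C L x i =
     C / L * real (x i) *
     log 2 (1 + 1 / (N0 + (\<Sum>j\<in>cells m. (real (x j) - (if j = i then 1 else 0)) * leps l Q eps i j)))"

text \<open>Minimal (Feller) transition function of the continuous-time Markov chain on N^I
  with birth rate b at every coordinate and death rate d x i at coordinate i:
  Pn n t x y = probability of being at y at time t after exactly n jumps, starting at x
  (first-jump decomposition of the backward equation).\<close>
fun Pn :: "idx set \<Rightarrow> real \<Rightarrow> (state \<Rightarrow> idx \<Rightarrow> real) \<Rightarrow> nat \<Rightarrow> real \<Rightarrow> state \<Rightarrow> state \<Rightarrow> ennreal" where
  "Pn I b d 0 t x y = (if x = y then ennreal (exp (- (\<Sum>i\<in>I. b + d x i) * t)) else 0)"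
| "Pn I b d (Suc n) t x y =
     (\<integral>\<^sup>+ s. indicator {0..t} s * ennreal (exp (- (\<Sum>i\<in>I. b + d x i) * s)) *
        (\<Sum>i\<in>I. ennreal b * Pn I b d n (t - s) (x(i := x i + 1)) y
               + ennreal (d x i) * Pn I b d n (t - s) (x(i := x i - 1)) y) \<partial>lborel)"

definition trans_prob :: "idx set \<Rightarrow> real \<Rightarrow> (state \<Rightarrow> idx \<Rightarrow> real) \<Rightarrow> real \<Rightarrow> state \<Rightarrow> state \<Rightarrow> ennreal" where
  "trans_prob I b d t x y = (\<Sum>n. Pn I b d n t x y)"

definition expect :: "idx set \<Rightarrow> real \<Rightarrow> (state \<Rightarrow> idx \<Rightarrow> real) \<Rightarrow> real \<Rightarrow> state \<Rightarrow> (state \<Rightarrow> ennreal) \<Rightarrow> ennreal" where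
  "expect I b d t x f = (\<integral>\<^sup>+ y. trans_prob I b d t x y * f y \<partial>count_space UNIV)"

definition supn :: "nat \<Rightarrow> state \<Rightarrow> nat" where
  "supn m x = Max (x ` cells m)"

end

theory Submission
  imports Defs
begin



lemma Pn_meas: "(\<lambda>t. Pn I b d n t x y) \<in> borel_measurable borel"
proof (induction n arbitrary: x)
  case 0
  then show ?case by simp
next
  case (Suc n)
  have m: "(\<lambda>p::real\<times>real. Pn I b d n (fst p - snd p) z y) \<in> borel_measurable (borel \<Otimes>\<^sub>M lborel)" for z
  proof -
    have "(\<lambda>p::real\<times>real. fst p - snd p) \<in> borel_measurable (borel \<Otimes>\<^sub>M lborel)" by measurable
    from measurable_compose[OF this Suc.IH[of z]] show ?thesis by (simp add: o_def)
  qed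
  have ind: "(\<lambda>p::real\<times>real. indicator {0..fst p} (snd p) :: ennreal) \<in> borel_measurable (borel \<Otimes>\<^sub>M lborel)"
  proof -
  have "{w \<in> space (borel \<Otimes>\<^sub>M lborel). (\<lambda>_. 0::real) w \<le> snd w} \<in> sets (borel \<Otimes>\<^sub>M lborel)"
      by (rule borel_measurable_le) auto
    moreover have "{w \<in> space (borel \<Otimes>\<^sub>M lborel). snd w \<le> fst (w::real\<times>real)} \<in> sets (borel \<Otimes>\<^sub>M lborel)"
      by (rule borel_measurable_le) auto
    ultimately have "{w \<in> space (borel \<Otimes>\<^sub>M lborel). (\<lambda>_. 0::real) w \<le> snd w} \<inter> {w \<in> space (borel \<Otimes>\<^sub>M lborel). snd w \<le> fst (w::real\<times>real)} \<in> sets (borel \<Otimes>\<^sub>M lborel)" by blast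
    moreover have "{w \<in> space (borel \<Otimes>\<^sub>M lborel). (\<lambda>_. 0::real) w \<le> snd w} \<inter> {w \<in> space (borel \<Otimes>\<^sub>M lborel). snd w \<le> fst (w::real\<times>real)} = {p::real\<times>real. 0 \<le> snd p \<and> snd p \<le> fst p}"
      by (auto simp: space_pair_measure)
    ultimately have "{p::real\<times>real. 0 \<le> snd p \<and> snd p \<le> fst p} \<in> sets (borel \<Otimes>\<^sub>M lborel)" by simp
    hence "(\<lambda>p. indicator {p::real\<times>real. 0 \<le> snd p \<and> snd p \<le> fst p} p :: ennreal) \<in> borel_measurable (borel \<Otimes>\<^sub>M lborel)"
      by (rule borel_measurable_indicator)
    moreover have "(\<lambda>p::real\<times>real. indicator {0..fst p} (snd p) :: ennreal) = (\<lambda>p. indicator {p::real\<times>real. 0 \<le> snd p \<and> snd p \<le> fst p} p)"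
      by (auto simp: indicator_def fun_eq_iff)
    ultimately show ?thesis by simp
  qed
  have "(\<lambda>p::real\<times>real. indicator {0..fst p} (snd p) * ennreal (exp (- (\<Sum>i\<in>I. b + d x i) * snd p)) *
        (\<Sum>i\<in>I. ennreal b * Pn I b d n (fst p - snd p) (x(i := x i + 1)) y
               + ennreal (d x i) * Pn I b d n (fst p - snd p) (x(i := x i - 1)) y)) \<in> borel_measurable (borel \<Otimes>\<^sub>M lborel)"
    using ind m by measurable
  hence "(\<lambda>t. \<integral>\<^sup>+ s. indicator {0..t} s * ennreal (exp (- (\<Sum>i\<in>I. b + d x i) * s)) *
        (\<Sum>i\<in>I. ennreal b * Pn I b d n (t - s) (x(i := x i + 1)) y
               + ennreal (d x i) * Pn I b d n (t - s) (x(i := x i - 1)) y) \<partial>lborel) \<in> borel_measurable borel"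
    by (intro lborel.borel_measurable_nn_integral) (simp add: case_prod_beta')
  then show ?case by simp
qed

fun reach :: "idx set \<Rightarrow> nat \<Rightarrow> state \<Rightarrow> state set" where
  "reach I 0 x = {x}"
| "reach I (Suc n) x = (\<Union>i\<in>I. reach I n (x(i := x i + 1)) \<union> reach I n (x(i := x i - 1)))"

lemma finite_reach: "finite I \<Longrightarrow> finite (reach I n x)"
  by (induction n arbitrary: x) auto

lemma Pn_outside: "y \<notin> reach I n x \<Longrightarrow> Pn I b d n t x y = 0"
proof (induction n arbitrary: x t)
  case 0 then show ?case by auto
next
  case (Suc n)
  have "\<And>s. (\<Sum>i\<in>I. ennreal b * Pn I b d n (t - s) (x(i := x i + 1)) y
               + ennreal (d x i) * Pn I b d n (t - s) (x(i := x i - 1)) y) = 0"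
    by (rule sum.neutral) (use Suc in auto)
  then show ?case by simp
qed

definition EE :: "idx set \<Rightarrow> real \<Rightarrow> (state \<Rightarrow> idx \<Rightarrow> real) \<Rightarrow> (state \<Rightarrow> real) \<Rightarrow> nat \<Rightarrow> real \<Rightarrow> state \<Rightarrow> ennreal" where
  "EE I b d f n t x = (\<Sum>y\<in>reach I n x. Pn I b d n t x y * ennreal (f y))"

lemma EE_sup: "finite Y \<Longrightarrow> reach I n x \<subseteq> Y \<Longrightarrow> EE I b d f n t x = (\<Sum>y\<in>Y. Pn I b d n t x y * ennreal (f y))"
  unfolding EE_def by (rule sum.mono_neutral_left) (auto simp: Pn_outside)

lemma expect_eq: assumes "finite I"
  shows "expect I b d t x (\<lambda>y. ennreal (f y)) = (\<Sum>n. EE I b d f n t x)"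
proof -
  have "expect I b d t x (\<lambda>y. ennreal (f y)) = (\<integral>\<^sup>+ y. (\<Sum>n. Pn I b d n t x y * ennreal (f y)) \<partial>count_space UNIV)"
    unfolding expect_def trans_prob_def by simp
  also have "\<dots> = (\<Sum>n. \<integral>\<^sup>+ y. Pn I b d n t x y * ennreal (f y) \<partial>count_space UNIV)"
    by (rule nn_integral_suminf) auto
  also have "\<dots> = (\<Sum>n. EE I b d f n t x)"
    unfolding EE_def
    by (intro suminf_cong nn_integral_count_space') (auto simp: finite_reach assms Pn_outside)
  finally show ?thesis .
qed

lemma EE_0: "EE I b d f 0 t x = ennreal (exp (- (\<Sum>i\<in>I. b + d x i) * t)) * ennreal (f x)"
  unfolding EE_def by simp

lemma EE_Suc: assumes "finite I"
  shows "EE I b d f (Suc n) t x = (\<integral>\<^sup>+ s. indicator {0..t} s * ennreal (exp (- (\<Sum>i\<in>I. b + d x i) * s)) *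
        (\<Sum>i\<in>I. ennreal b * EE I b d f n (t - s) (x(i := x i + 1))
               + ennreal (d x i) * EE I b d f n (t - s) (x(i := x i - 1))) \<partial>lborel)"
proof -
  let ?Y = "reach I (Suc n) x"
  let ?K = "\<lambda>s y. indicator {0..t} s * ennreal (exp (- (\<Sum>i\<in>I. b + d x i) * s)) *
        (\<Sum>i\<in>I. ennreal b * Pn I b d n (t - s) (x(i := x i + 1)) y
               + ennreal (d x i) * Pn I b d n (t - s) (x(i := x i - 1)) y)"
  have fin: "finite ?Y" using finite_reach[OF assms] .
  have meas: "(\<lambda>s. ?K s y * ennreal (f y)) \<in> borel_measurable lborel" for y
  proof -
    have [measurable]: "(\<lambda>s. Pn I b d n (t - s) z y) \<in> borel_measurable borel" for z
      using measurable_compose[OF _ Pn_meas, of "\<lambda>s. t - s" borel] by (simp add: o_def)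
    show ?thesis by measurable
  qed
  have "EE I b d f (Suc n) t x = (\<Sum>y\<in>?Y. (\<integral>\<^sup>+ s. ?K s y \<partial>lborel) * ennreal (f y))"
    unfolding EE_def by simp
  also have "\<dots> = (\<Sum>y\<in>?Y. (\<integral>\<^sup>+ s. ?K s y * ennreal (f y) \<partial>lborel))"
  proof (rule sum.cong[OF refl])
    fix y
    have "(\<lambda>s. ?K s y) \<in> borel_measurable lborel"
    proof -
      have [measurable]: "(\<lambda>s. Pn I b d n (t - s) z y) \<in> borel_measurable borel" for z
        using measurable_compose[OF _ Pn_meas, of "\<lambda>s. t - s" borel] by (simp add: o_def)
      show ?thesis by measurable
    qed
    then show "(\<integral>\<^sup>+ s. ?K s y \<partial>lborel) * ennreal (f y) = (\<integral>\<^sup>+ s. ?K s y * ennreal (f y) \<partial>lborel)"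
      by (rule nn_integral_multc[symmetric])
  qed
  also have "\<dots> = (\<integral>\<^sup>+ s. (\<Sum>y\<in>?Y. ?K s y * ennreal (f y)) \<partial>lborel)"
    by (rule nn_integral_sum[symmetric]) (use meas in auto)
  also have "\<dots> = (\<integral>\<^sup>+ s. indicator {0..t} s * ennreal (exp (- (\<Sum>i\<in>I. b + d x i) * s)) *
        (\<Sum>i\<in>I. ennreal b * EE I b d f n (t - s) (x(i := x i + 1))
               + ennreal (d x i) * EE I b d f n (t - s) (x(i := x i - 1))) \<partial>lborel)"
  proof (rule nn_integral_cong)
    fix s
    let ?A = "indicator {0..t} s * ennreal (exp (- (\<Sum>i\<in>I. b + d x i) * s)) :: ennreal"
    let ?P = "\<lambda>i y. Pn I b d n (t - s) (x(i := x i + 1)) y * ennreal (f y)"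
    let ?M = "\<lambda>i y. Pn I b d n (t - s) (x(i := x i - 1)) y * ennreal (f y)"
    have e1: "EE I b d f n (t - s) (x(i := x i + 1)) = (\<Sum>y\<in>?Y. ?P i y)" if "i \<in> I" for i
      by (rule EE_sup[OF fin]) (use that in auto)
    have e2: "EE I b d f n (t - s) (x(i := x i - 1)) = (\<Sum>y\<in>?Y. ?M i y)" if "i \<in> I" for i
      by (rule EE_sup[OF fin]) (use that in auto)
    have "(\<Sum>y\<in>?Y. ?K s y * ennreal (f y)) = (\<Sum>y\<in>?Y. ?A * (\<Sum>i\<in>I. ennreal b * ?P i y + ennreal (d x i) * ?M i y))"
      by (rule sum.cong[OF refl]) (simp add: sum_distrib_right distrib_right mult.assoc)
    also have "\<dots> = ?A * (\<Sum>i\<in>I. \<Sum>y\<in>?Y. ennreal b * ?P i y + ennreal (d x i) * ?M i y)"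
      by (simp add: sum_distrib_left[symmetric] sum.swap[of _ I])
    also have "\<dots> = ?A * (\<Sum>i\<in>I. ennreal b * (\<Sum>y\<in>?Y. ?P i y) + ennreal (d x i) * (\<Sum>y\<in>?Y. ?M i y))"
      by (simp add: sum.distrib sum_distrib_left)
    also have "\<dots> = ?A * (\<Sum>i\<in>I. ennreal b * EE I b d f n (t - s) (x(i := x i + 1))
               + ennreal (d x i) * EE I b d f n (t - s) (x(i := x i - 1)))"
      apply (intro arg_cong[where f="\<lambda>z. ?A * z"] sum.cong refl)
      subgoal premises p for i using e1[OF p] e2[OF p] by simp
      done
    finally show "(\<Sum>y\<in>?Y. ?K s y * ennreal (f y)) = ?A * (\<Sum>i\<in>I. ennreal b * EE I b d f n (t - s) (x(i := x i + 1))
               + ennreal (d x i) * EE I b d f n (t - s) (x(i := x i - 1)))" .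
  qed
  finally show ?thesis .
qed

lemma EE_meas: "(\<lambda>s. EE I b d f n (t - s) z) \<in> borel_measurable borel"
proof -
  have [measurable]: "(\<lambda>s. Pn I b d n (t - s) z y) \<in> borel_measurable borel" for y
    using measurable_compose[OF _ Pn_meas, of "\<lambda>s. t - s" borel] by (simp add: o_def)
  show ?thesis unfolding EE_def by measurable
qed

lemma comparison:
  fixes I :: "idx set" and b :: real and d :: "state \<Rightarrow> idx \<Rightarrow> real" and f :: "state \<Rightarrow> real"
    and w w' :: "real \<Rightarrow> state \<Rightarrow> real"
  assumes fin: "finite I" and bnn: "b \<ge> 0" and dn: "\<And>x i. i \<in> I \<Longrightarrow> d x i \<ge> 0"
    and der: "\<And>x r. ((\<lambda>r. w r x) has_real_derivative w' r x) (at r)"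
    and cont: "\<And>x r. isCont (\<lambda>r. w' r x) r"
    and wpos: "\<And>x r. r \<ge> 0 \<Longrightarrow> w r x \<ge> 0"
    and init: "\<And>y. f y \<le> w 0 y"
    and sup: "\<And>x r. r \<ge> 0 \<Longrightarrow> (\<Sum>i\<in>I. b * w r (x(i := x i + 1)) + d x i * w r (x(i := x i - 1)))
                 - (\<Sum>i\<in>I. b + d x i) * w r x \<le> w' r x"
    and t: "t \<ge> 0"
  shows "expect I b d t x (\<lambda>y. ennreal (f y)) \<le> ennreal (w t x)"
proof -
  have key: "\<forall>t\<ge>0. \<forall>x. (\<Sum>n<N. EE I b d f n t x) \<le> ennreal (w t x)" for N
  proof (induction N)
    case 0 then show ?case by simp
  next
    case (Suc N)
    show ?case
    proof (intro allI impI)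
      fix t :: real and x :: state assume t: "t \<ge> 0"
      define q where "q = (\<Sum>i\<in>I. b + d x i)"
      define R where "R r = (\<Sum>i\<in>I. b * w r (x(i := x i + 1)) + d x i * w r (x(i := x i - 1)))" for r
      define G where "G s = - exp (- q * s) * w (t - s) x" for s
      define G' where "G' s = exp (- q * s) * (q * w (t - s) x + w' (t - s) x)" for s
      have Rnn: "R r \<ge> 0" if "r \<ge> 0" for r
        unfolding R_def using that bnn dn wpos by (intro sum_nonneg add_nonneg_nonneg mult_nonneg_nonneg) auto
      have RG: "exp (- q * s) * R (t - s) \<le> G' s" if "s \<le> t" for s
      proof -
        have "R (t - s) - q * w (t - s) x \<le> w' (t - s) x"
          using sup[of "t - s" x] that unfolding R_def q_def by simp
        then have "R (t - s) \<le> q * w (t - s) x + w' (t - s) x" by simp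
        then show ?thesis unfolding G'_def by (intro mult_left_mono) auto
      qed
      have G'nn: "G' s \<ge> 0" if "s \<le> t" for s
      proof -
        have "0 \<le> exp (- q * s) * R (t - s)" using Rnn[of "t - s"] that by simp
        then show ?thesis using RG[OF that] by linarith
      qed
      have dw: "((\<lambda>s. w (t - s) x) has_real_derivative - w' (t - s) x) (at s)" for s
      proof -
        have "((\<lambda>s. t - s) has_real_derivative -1) (at s)" by (auto intro!: derivative_eq_intros)
        from DERIV_chain2[where f="\<lambda>r. w r x", OF der this] show ?thesis by simp
      qed
      have dG: "(G has_real_derivative G' s) (at s)" for s
      proof -
        have e: "((\<lambda>s. - exp (- q * s)) has_real_derivative q * exp (- q * s)) (at s)"
          by (auto intro!: derivative_eq_intros)
        have "((\<lambda>s. - exp (- q * s) * w (t - s) x) has_real_derivative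
                 q * exp (- q * s) * w (t - s) x + - w' (t - s) x * - exp (- q * s)) (at s)"
          using DERIV_mult[OF e dw[of s]] by simp
        then show ?thesis unfolding G_def G'_def
          by (rule DERIV_cong) (simp add: algebra_simps)
      qed
      have contw: "isCont (\<lambda>s. w (t - s) x) s" for s
        using dw DERIV_isCont by blast
      have contG': "isCont G' s" for s
      proof -
        have "isCont (\<lambda>s. w' (t - s) x) s"
          by (rule isCont_o2[where f="\<lambda>s. t - s" and g="\<lambda>r. w' r x"]) (auto intro!: continuous_intros cont)
        then show ?thesis unfolding G'_def using contw by (auto intro!: continuous_intros)
      qed
      have G'meas: "G' \<in> borel_measurable borel"
        by (rule borel_measurable_continuous_onI) (use contG' in \<open>simp add: continuous_at_imp_continuous_on\<close>)
      have "(\<Sum>n<N. EE I b d f (Suc n) t x) = (\<Sum>n<N. \<integral>\<^sup>+ s. indicator {0..t} s * ennreal (exp (- q * s)) *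
        (\<Sum>i\<in>I. ennreal b * EE I b d f n (t - s) (x(i := x i + 1))
               + ennreal (d x i) * EE I b d f n (t - s) (x(i := x i - 1))) \<partial>lborel)"
        unfolding q_def by (simp add: EE_Suc[OF fin])
      also have "\<dots> = (\<integral>\<^sup>+ s. (\<Sum>n<N. indicator {0..t} s * ennreal (exp (- q * s)) *
        (\<Sum>i\<in>I. ennreal b * EE I b d f n (t - s) (x(i := x i + 1))
               + ennreal (d x i) * EE I b d f n (t - s) (x(i := x i - 1)))) \<partial>lborel)"
      proof (rule nn_integral_sum[symmetric])
        fix n
        have [measurable]: "(\<lambda>s. EE I b d f n (t - s) z) \<in> borel_measurable borel" for z
          by (rule EE_meas)
        show "(\<lambda>s. indicator {0..t} s * ennreal (exp (- q * s)) *
        (\<Sum>i\<in>I. ennreal b * EE I b d f n (t - s) (x(i := x i + 1))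
               + ennreal (d x i) * EE I b d f n (t - s) (x(i := x i - 1)))) \<in> borel_measurable lborel"
          by measurable
      qed
      also have "\<dots> \<le> (\<integral>\<^sup>+ s. ennreal (G' s) * indicator {0..t} s \<partial>lborel)"
      proof (rule nn_integral_mono)
        fix s
        show "(\<Sum>n<N. indicator {0..t} s * ennreal (exp (- q * s)) *
          (\<Sum>i\<in>I. ennreal b * EE I b d f n (t - s) (x(i := x i + 1))
               + ennreal (d x i) * EE I b d f n (t - s) (x(i := x i - 1)))) \<le> ennreal (G' s) * indicator {0..t} s"
        proof (cases "s \<in> {0..t}")
          case False then show ?thesis by simp
        next
          case True
          have ts: "t - s \<ge> 0" using True by auto
          have "(\<Sum>n<N. indicator {0..t} s * ennreal (exp (- q * s)) *
              (\<Sum>i\<in>I. ennreal b * EE I b d f n (t - s) (x(i := x i + 1))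
               + ennreal (d x i) * EE I b d f n (t - s) (x(i := x i - 1))))
            = ennreal (exp (- q * s)) * (\<Sum>i\<in>I. ennreal b * (\<Sum>n<N. EE I b d f n (t - s) (x(i := x i + 1)))
               + ennreal (d x i) * (\<Sum>n<N. EE I b d f n (t - s) (x(i := x i - 1))))"
          proof -
            have "(\<Sum>n<N. indicator {0..t} s * ennreal (exp (- q * s)) *
              (\<Sum>i\<in>I. ennreal b * EE I b d f n (t - s) (x(i := x i + 1))
               + ennreal (d x i) * EE I b d f n (t - s) (x(i := x i - 1))))
              = ennreal (exp (- q * s)) * (\<Sum>n<N. \<Sum>i\<in>I. ennreal b * EE I b d f n (t - s) (x(i := x i + 1))
               + ennreal (d x i) * EE I b d f n (t - s) (x(i := x i - 1)))"
              using True by (simp add: sum_distrib_left)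
            also have "\<dots> = ennreal (exp (- q * s)) * (\<Sum>i\<in>I. \<Sum>n<N. ennreal b * EE I b d f n (t - s) (x(i := x i + 1))
               + ennreal (d x i) * EE I b d f n (t - s) (x(i := x i - 1)))"
              by (rule arg_cong[where f="\<lambda>z. _ * z"], rule sum.swap)
            also have "\<dots> = ennreal (exp (- q * s)) * (\<Sum>i\<in>I. ennreal b * (\<Sum>n<N. EE I b d f n (t - s) (x(i := x i + 1)))
               + ennreal (d x i) * (\<Sum>n<N. EE I b d f n (t - s) (x(i := x i - 1))))"
              by (simp only: sum.distrib sum_distrib_left)
            finally show ?thesis .
          qed
          also have "\<dots> \<le> ennreal (exp (- q * s)) * (\<Sum>i\<in>I. ennreal b * ennreal (w (t - s) (x(i := x i + 1)))
               + ennreal (d x i) * ennreal (w (t - s) (x(i := x i - 1))))"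
            using Suc.IH ts by (intro mult_left_mono sum_mono add_mono) auto
          also have "\<dots> = ennreal (exp (- q * s) * R (t - s))"
          proof -
            have e: "ennreal b * ennreal (w (t - s) (x(i := x i + 1))) + ennreal (d x i) * ennreal (w (t - s) (x(i := x i - 1)))
               = ennreal (b * w (t - s) (x(i := x i + 1)) + d x i * w (t - s) (x(i := x i - 1)))" if "i \<in> I" for i
              using bnn dn[OF that] wpos[OF ts] by (simp add: ennreal_mult ennreal_plus)
            have "(\<Sum>i\<in>I. ennreal b * ennreal (w (t - s) (x(i := x i + 1)))
               + ennreal (d x i) * ennreal (w (t - s) (x(i := x i - 1)))) = ennreal (R (t - s))"
              unfolding R_def using bnn dn wpos[OF ts]
              by (simp only: sum.cong[OF refl e]) (rule sum_ennreal, intro add_nonneg_nonneg mult_nonneg_nonneg, auto)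
            then show ?thesis by (simp add: ennreal_mult')
          qed
          also have "\<dots> \<le> ennreal (G' s)"
            using RG True by (intro ennreal_leI) auto
          finally show ?thesis using True by simp
        qed
      qed
      also have "\<dots> = ennreal (G t - G 0)"
        by (rule nn_integral_FTC_Icc[OF G'meas]) (use dG G'nn t in auto)
      finally have A: "(\<Sum>n<N. EE I b d f (Suc n) t x) \<le> ennreal (G t - G 0)" .
      have mono: "G 0 \<le> G t"
        by (rule DERIV_nonneg_imp_nondecreasing[OF t]) (use dG G'nn in auto)
      have "EE I b d f 0 t x = ennreal (exp (- q * t)) * ennreal (f x)"
        unfolding q_def by (simp add: EE_0)
      also have "\<dots> \<le> ennreal (exp (- q * t) * w 0 x)"
      proof (cases "f x \<ge> 0")
        case True
        then have "ennreal (exp (- q * t)) * ennreal (f x) = ennreal (exp (- q * t) * f x)" by (simp add: ennreal_mult)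
        also have "\<dots> \<le> ennreal (exp (- q * t) * w 0 x)" using init[of x] by (intro ennreal_leI mult_left_mono) auto
        finally show ?thesis .
      next
        case False then show ?thesis by (simp add: ennreal_neg)
      qed
      finally have B: "EE I b d f 0 t x \<le> ennreal (exp (- q * t) * w 0 x)" .
      have C: "exp (- q * t) * w 0 x + (G t - G 0) = w t x"
        unfolding G_def by simp
      have "EE I b d f 0 t x + (\<Sum>n<N. EE I b d f (Suc n) t x) \<le> ennreal (exp (- q * t) * w 0 x) + ennreal (G t - G 0)"
        by (rule add_mono[OF B A])
      also have "\<dots> = ennreal (exp (- q * t) * w 0 x + (G t - G 0))"
        using mono wpos[of 0 x] by (simp add: ennreal_plus)
      also have "\<dots> = ennreal (w t x)" using C by simp
      finally show "(\<Sum>n<Suc N. EE I b d f n t x) \<le> ennreal (w t x)"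
        by (simp only: sum.lessThan_Suc_shift)
    qed
  qed
  have "expect I b d t x (\<lambda>y. ennreal (f y)) = (\<Sum>n. EE I b d f n t x)"
    by (rule expect_eq[OF fin])
  also have "\<dots> \<le> ennreal (w t x)"
    by (rule suminf_le_const) (use key t in auto)
  finally show ?thesis .
qed



lemma tdist_set_ne: "{norm (u - v + (2 * Q * of_int k1, 2 * Q * of_int k2)) | k1 k2 :: int. True} \<noteq> {}"
  by blast

lemma tdist_nonneg: "tdist Q u v \<ge> 0"
  unfolding tdist_def by (rule cInf_greatest[OF tdist_set_ne]) auto

lemma tdist_self: "tdist Q u u = 0"
proof -
  have "tdist Q u u \<le> norm (u - u + (2 * Q * of_int (0::int), 2 * Q * of_int (0::int)))"
    unfolding tdist_def by (rule cInf_lower) (auto intro!: bdd_belowI[where m=0] exI[where x=0] simp: zero_prod_def)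
  then show ?thesis using tdist_nonneg[of Q u u] by (simp add: zero_prod_def)
qed

lemma tdist_period:
  fixes p1 p2 :: int
  shows "tdist Q (u + (2 * Q * of_int p1, 2 * Q * of_int p2)) v = tdist Q u v"
proof -
  have "{norm (u + (2 * Q * of_int p1, 2 * Q * of_int p2) - v + (2 * Q * of_int k1, 2 * Q * of_int k2)) | k1 k2 :: int. True}
      = {norm (u - v + (2 * Q * of_int k1, 2 * Q * of_int k2)) | k1 k2 :: int. True}"
  proof (intro set_eqI iffI)
    fix z assume "z \<in> {norm (u + (2 * Q * of_int p1, 2 * Q * of_int p2) - v + (2 * Q * of_int k1, 2 * Q * of_int k2)) | k1 k2 :: int. True}"
    then obtain k1 k2 :: int where z: "z = norm (u + (2 * Q * of_int p1, 2 * Q * of_int p2) - v + (2 * Q * of_int k1, 2 * Q * of_int k2))" by blast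
    have "z = norm (u - v + (2 * Q * of_int (k1 + p1), 2 * Q * of_int (k2 + p2)))"
      unfolding z by (simp add: algebra_simps)
    then show "z \<in> {norm (u - v + (2 * Q * of_int k1, 2 * Q * of_int k2)) | k1 k2 :: int. True}" by blast
  next
    fix z assume "z \<in> {norm (u - v + (2 * Q * of_int k1, 2 * Q * of_int k2)) | k1 k2 :: int. True}"
    then obtain k1 k2 :: int where z: "z = norm (u - v + (2 * Q * of_int k1, 2 * Q * of_int k2))" by blast
    have "z = norm (u + (2 * Q * of_int p1, 2 * Q * of_int p2) - v + (2 * Q * of_int (k1 - p1), 2 * Q * of_int (k2 - p2)))"
      unfolding z by (simp add: algebra_simps)
    then show "z \<in> {norm (u + (2 * Q * of_int p1, 2 * Q * of_int p2) - v + (2 * Q * of_int k1, 2 * Q * of_int k2)) | k1 k2 :: int. True}" by blast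
  qed
  then show ?thesis unfolding tdist_def by simp
qed

lemma tdist_shift: "tdist Q (u + a) (v + a) = tdist Q u v"
  unfolding tdist_def by simp

lemma mem_cell: "b \<in> cell eps i \<longleftrightarrow>
   real (fst i) * eps - eps / 2 \<le> fst b \<and> fst b \<le> real (fst i) * eps + eps / 2 \<and>
   real (snd i) * eps - eps / 2 \<le> snd b \<and> snd b \<le> real (snd i) * eps + eps / 2"
  unfolding cell_def by (cases b) (auto simp: cbox_Pair_eq)

definition lset :: "(real \<Rightarrow> real) \<Rightarrow> real \<Rightarrow> real \<Rightarrow> idx \<Rightarrow> idx \<Rightarrow> real set" where "lset l Q eps i j = {l (tdist Q b b') | b b'. b \<in> cell eps i \<and> b' \<in> cell eps j}"

lemma leps_lset: "leps l Q eps i j = Sup (lset l Q eps i j)"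
  unfolding leps_def lset_def by simp

lemma lset_ne: assumes "eps > 0" shows "lset l Q eps i j \<noteq> {}"
proof -
  have "(real (fst i) * eps, real (snd i) * eps) \<in> cell eps i" "(real (fst j) * eps, real (snd j) * eps) \<in> cell eps j"
    using assms by (auto simp: mem_cell)
  then show ?thesis unfolding lset_def by blast
qed

lemma lset_bdd: assumes "bounded (l ` {0..})" shows "bdd_above (lset l Q eps i j)"
proof -
  have "lset l Q eps i j \<subseteq> l ` {0..}" unfolding lset_def using tdist_nonneg by fastforce
  then show ?thesis by (rule bdd_above_mono[OF bounded_imp_bdd_above[OF assms]])
qed

lemma leps_nonneg: assumes "eps > 0" "bounded (l ` {0..})" "\<forall>u\<ge>0. l u \<ge> 0"
  shows "leps l Q eps i j \<ge> 0"
proof -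
  obtain z where z: "z \<in> lset l Q eps i j" using lset_ne[OF assms(1)] by blast
  have "z \<ge> 0" using z assms(3) tdist_nonneg unfolding lset_def by auto
  also have "z \<le> leps l Q eps i j" unfolding leps_lset by (rule cSup_upper[OF z lset_bdd[OF assms(2)]])
  finally show ?thesis .
qed

lemma leps_ge: assumes "bounded (l ` {0..})" "b \<in> cell eps i" "b' \<in> cell eps j"
  shows "l (tdist Q b b') \<le> leps l Q eps i j"
proof -
  have "l (tdist Q b b') \<in> lset l Q eps i j" unfolding lset_def using assms by blast
  then show ?thesis unfolding leps_lset by (rule cSup_upper[OF _ lset_bdd[OF assms(1)]])
qed

definition sh :: "nat \<Rightarrow> nat \<Rightarrow> nat \<Rightarrow> nat" where
  "sh m a c = (if c \<le> a then a - c else a + m - c)"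

definition kk :: "nat \<Rightarrow> idx \<Rightarrow> idx \<Rightarrow> idx" where
  "kk m i j = (sh m (fst i) (fst j), sh m (snd i) (snd j))"

lemma sh_real: assumes "c \<le> m" shows "\<exists>p::int. real (sh m a c) = real a - real c + real m * of_int p"
proof (cases "c \<le> a")
  case True then show ?thesis by (intro exI[where x=0]) (simp add: sh_def)
next
  case False then show ?thesis using assms by (intro exI[where x=1]) (simp add: sh_def of_nat_diff)
qed

lemma leps_shift:
  assumes eps: "eps > 0" and m: "real m * eps = 2 * Q" and bd: "bounded (l ` {0..})" and j: "j \<in> cells m"
  shows "leps l Q eps i j \<le> leps l Q eps (kk m i j) (0, 0)"
proof -
  have jm: "fst j \<le> m" "snd j \<le> m" using j by (auto simp: cells_def)
  obtain p1 :: int where p1: "real (sh m (fst i) (fst j)) = real (fst i) - real (fst j) + real m * of_int p1"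
    using sh_real[OF jm(1)] by blast
  obtain p2 :: int where p2: "real (sh m (snd i) (snd j)) = real (snd i) - real (snd j) + real m * of_int p2"
    using sh_real[OF jm(2)] by blast
  define v where "v = (- real (fst j) * eps, - real (snd j) * eps)"
  define P where "P = (2 * Q * of_int p1, 2 * Q * of_int p2)"
  have sub: "lset l Q eps i j \<subseteq> lset l Q eps (kk m i j) (0, 0)"
  proof
    fix z assume "z \<in> lset l Q eps i j"
    then obtain b b' where z: "z = l (tdist Q b b')" and b: "b \<in> cell eps i" and b': "b' \<in> cell eps j"
      unfolding lset_def by blast
    have td: "tdist Q ((b + v) + P) (b' + v) = tdist Q b b'"
      unfolding P_def by (simp add: tdist_period tdist_shift)
    have c1: "(b + v) + P \<in> cell eps (kk m i j)"
    proof -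
      have e1: "real (sh m (fst i) (fst j)) * eps = real (fst i) * eps - real (fst j) * eps + 2 * Q * of_int p1"
      proof -
        have "real (sh m (fst i) (fst j)) * eps = real (fst i) * eps - real (fst j) * eps + (real m * eps) * of_int p1"
          by (simp add: p1 algebra_simps)
        then show ?thesis using m by simp
      qed
      have e2: "real (sh m (snd i) (snd j)) * eps = real (snd i) * eps - real (snd j) * eps + 2 * Q * of_int p2"
      proof -
        have "real (sh m (snd i) (snd j)) * eps = real (snd i) * eps - real (snd j) * eps + (real m * eps) * of_int p2"
          by (simp add: p2 algebra_simps)
        then show ?thesis using m by simp
      qed
      have f1: "fst ((b + v) + P) = fst b - real (fst j) * eps + 2 * Q * of_int p1" by (simp add: v_def P_def)
      have f2: "snd ((b + v) + P) = snd b - real (snd j) * eps + 2 * Q * of_int p2" by (simp add: v_def P_def)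
      have bb: "real (fst i) * eps - eps / 2 \<le> fst b" "fst b \<le> real (fst i) * eps + eps / 2"
        "real (snd i) * eps - eps / 2 \<le> snd b" "snd b \<le> real (snd i) * eps + eps / 2"
        using b unfolding mem_cell by auto
      show ?thesis unfolding mem_cell kk_def fst_conv snd_conv f1 f2 e1 e2
        using bb by (intro conjI; linarith)
    qed
    have c2: "b' + v \<in> cell eps (0, 0)"
      using b' unfolding mem_cell v_def by auto
    have z': "z = l (tdist Q ((b + v) + P) (b' + v))" using z td by simp
    show "z \<in> lset l Q eps (kk m i j) (0, 0)" unfolding lset_def using z' c1 c2 by blast
  qed
  show ?thesis unfolding leps_lset
    by (rule cSup_subset_mono[OF lset_ne[OF eps] lset_bdd[OF bd] sub])
qed

lemma kk_cells: "i \<in> cells m \<Longrightarrow> j \<in> cells m \<Longrightarrow> kk m i j \<in> cells m"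
  unfolding cells_def kk_def sh_def by (auto split: if_splits)

lemma sh_inj: "a < m \<Longrightarrow> c1 < m \<Longrightarrow> c2 < m \<Longrightarrow> sh m a c1 = sh m a c2 \<Longrightarrow> c1 = c2"
  unfolding sh_def by (auto split: if_splits)

lemma kk_inj: "i \<in> cells m \<Longrightarrow> inj_on (kk m i) (cells m)"
  unfolding inj_on_def cells_def kk_def using sh_inj by (auto simp: prod_eq_iff)

lemma leps_sum_le:
  assumes eps: "eps > 0" and m: "real m * eps = 2 * Q" and bd: "bounded (l ` {0..})" and lnn: "\<forall>u\<ge>0. l u \<ge> 0"
    and i: "i \<in> cells m"
  shows "(\<Sum>j\<in>cells m. leps l Q eps i j) \<le> (\<Sum>k\<in>cells m. leps l Q eps k (0, 0))"
proof -
  have sub: "kk m i ` cells m \<subseteq> cells m" using kk_cells[OF i] by blast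
  have "(\<Sum>j\<in>cells m. leps l Q eps i j) \<le> (\<Sum>j\<in>cells m. leps l Q eps (kk m i j) (0, 0))"
    by (intro sum_mono leps_shift[OF eps m bd])
  also have "\<dots> = (\<Sum>k\<in>kk m i ` cells m. leps l Q eps k (0, 0))"
    by (rule sum.reindex[OF kk_inj[OF i], symmetric, unfolded o_def])
  also have "\<dots> \<le> (\<Sum>k\<in>cells m. leps l Q eps k (0, 0))"
    by (rule sum_mono2[OF _ sub]) (auto simp: cells_def leps_nonneg[OF eps bd lnn])
  finally show ?thesis .
qed



definition ph :: "real \<Rightarrow> real \<Rightarrow> real \<Rightarrow> real" where
  "ph h z0 z = ln (1 + exp (h * (z - z0))) / h"
definition dph :: "real \<Rightarrow> real \<Rightarrow> real \<Rightarrow> real" where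
  "dph h z0 z = exp (h * (z - z0)) / (1 + exp (h * (z - z0)))"

lemma ph_deriv: assumes "h > 0" shows "(ph h z0 has_real_derivative dph h z0 z) (at z)"
proof -
  have d1: "((\<lambda>z. ln (1 + exp (h * (z - z0)))) has_real_derivative
      (1 / (1 + exp (h * (z - z0))) * (exp (h * (z - z0)) * h))) (at z)"
    by (auto intro!: derivative_eq_intros simp: add_pos_pos)
  have "((\<lambda>z. ln (1 + exp (h * (z - z0))) / h) has_real_derivative
      (1 / (1 + exp (h * (z - z0))) * (exp (h * (z - z0)) * h)) / h) (at z)"
    by (rule DERIV_cdivide[OF d1])
  then show ?thesis unfolding ph_def dph_def
    by (rule DERIV_cong) (use assms in \<open>simp add: add_pos_pos\<close>)
qed

lemma dph_pos: "dph h z0 z > 0"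
  unfolding dph_def by (simp add: add_pos_pos)

lemma dph_le_exp: "dph h z0 z \<le> exp (h * (z - z0))"
  unfolding dph_def by (simp add: divide_le_eq add_pos_pos)

lemma frac_mono: "(0::real) \<le> a \<Longrightarrow> a \<le> b \<Longrightarrow> a / (1 + a) \<le> b / (1 + b)"
  by (simp add: divide_le_eq field_simps add_pos_pos mult_right_mono)

lemma dph_mono: assumes "h > 0" "z \<le> z'" shows "dph h z0 z \<le> dph h z0 z'"
  unfolding dph_def by (rule frac_mono) (use assms in \<open>auto simp: mult_left_mono\<close>)

lemma dph_up: assumes "h > 0" "a \<le> 1" shows "dph h z0 (z + a) \<le> exp h * dph h z0 z"
proof -
  have "dph h z0 (z + a) \<le> dph h z0 (z + 1)" using assms by (intro dph_mono) auto
  also have "\<dots> \<le> exp h * dph h z0 z"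
  proof -
    define E where "E = exp (h * (z - z0))"
    have E: "E > 0" unfolding E_def by simp
    have "exp (h * (z + 1 - z0)) = E * exp h" unfolding E_def by (simp add: algebra_simps flip: exp_add)
    then have "dph h z0 (z + 1) = E * exp h / (1 + E * exp h)" unfolding dph_def by simp
    also have "\<dots> \<le> exp h * (E / (1 + E))"
      using E assms by (simp add: field_simps add_pos_pos mult_left_mono)
    finally show ?thesis unfolding dph_def E_def .
  qed
  finally show ?thesis .
qed

lemma dph_down: assumes "h > 0" "-1 \<le> a" shows "exp (- h) * dph h z0 z \<le> dph h z0 (z + a)"
proof -
  have "exp (- h) * dph h z0 z \<le> dph h z0 (z - 1)"
  proof -
    define E where "E = exp (h * (z - z0))"
    have E: "E > 0" unfolding E_def by simp
    have "exp (h * (z - 1 - z0)) = E * exp (- h)" unfolding E_def by (simp add: algebra_simps flip: exp_add)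
    then have "dph h z0 (z - 1) = E * exp (- h) / (1 + E * exp (- h))" unfolding dph_def by simp
    moreover have "exp (- h) * (E / (1 + E)) \<le> E * exp (- h) / (1 + E * exp (- h))"
    proof -
      have "E * exp (- h) \<le> E" using E assms by (simp add: mult_le_cancel_left1)
      then show ?thesis using E by (simp add: field_simps add_pos_pos mult_left_mono)
    qed
    ultimately show ?thesis unfolding dph_def E_def by simp
  qed
  also have "\<dots> \<le> dph h z0 (z + a)" using assms by (intro dph_mono) auto
  finally show ?thesis .
qed

lemma ph_convex: assumes "h > 0" shows "ph h z0 (z + d) - ph h z0 z \<le> dph h z0 (z + d) * d"
proof (cases d "0::real" rule: linorder_cases)
  case less
  obtain y where y: "z + d < y" "y < z" "ph h z0 z - ph h z0 (z + d) = (z - (z + d)) * dph h z0 y"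
    using MVT2[of "z + d" z "ph h z0" "dph h z0"] less ph_deriv[OF assms] by auto
  have "dph h z0 (z + d) \<le> dph h z0 y" using y assms by (intro dph_mono) auto
  then have "d * dph h z0 y \<le> d * dph h z0 (z + d)" using less by (intro mult_left_mono_neg) auto
  then show ?thesis using y(3) by (simp add: algebra_simps)
next
  case equal then show ?thesis by simp
next
  case greater
  obtain y where y: "z < y" "y < z + d" "ph h z0 (z + d) - ph h z0 z = (z + d - z) * dph h z0 y"
    using MVT2[of z "z + d" "ph h z0" "dph h z0"] greater ph_deriv[OF assms] by auto
  have "dph h z0 y \<le> dph h z0 (z + d)" using y assms by (intro dph_mono) auto
  then show ?thesis using y greater by (simp add: mult_right_mono algebra_simps)
qed

lemma ph_ge: assumes "h > 0" shows "ph h z0 z \<ge> z - z0" "ph h z0 z \<ge> 0"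
proof -
  have "h * (z - z0) = ln (exp (h * (z - z0)))" by simp
  also have "\<dots> \<le> ln (1 + exp (h * (z - z0)))"
    using ln_le_cancel_iff[of "exp (h * (z - z0))" "1 + exp (h * (z - z0))"] by (simp add: add_pos_pos)
  finally show "ph h z0 z \<ge> z - z0" unfolding ph_def using assms by (simp add: le_divide_eq mult.commute)
  show "ph h z0 z \<ge> 0" unfolding ph_def using assms by simp
qed

lemma ph_le: assumes "h > 0" shows "ph h z0 z \<le> max 0 (z - z0) + ln 2 / h"
proof -
  define E where "E = exp (h * (z - z0))"
  have "1 + E \<le> 2 * exp (h * max 0 (z - z0))" unfolding E_def using assms
    by (cases "z \<le> z0") (auto simp: max_def mult_le_0_iff)
  then have "ln (1 + E) \<le> ln (2 * exp (h * max 0 (z - z0)))" unfolding E_def by (simp add: add_pos_pos)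
  also have "\<dots> = ln 2 + h * max 0 (z - z0)" by (simp add: ln_mult)
  finally have "ln (1 + E) \<le> ln 2 + h * max 0 (z - z0)" .
  then show ?thesis unfolding ph_def E_def[symmetric] using assms by (simp add: divide_le_eq algebra_simps)
qed



definition Zs :: "nat \<Rightarrow> real \<Rightarrow> state \<Rightarrow> real" where
  "Zs m h x = (\<Sum>i\<in>cells m. exp (h * real (x i)))"
definition Us :: "nat \<Rightarrow> real \<Rightarrow> state \<Rightarrow> real" where
  "Us m h x = ln (Zs m h x) / h"

lemma finite_cells[simp]: "finite (cells m)" unfolding cells_def by simp
lemma cells_ne: "m > 0 \<Longrightarrow> cells m \<noteq> {}" unfolding cells_def by auto
lemma card_cells: "card (cells m) = m * m" unfolding cells_def by (simp add: card_cartesian_product)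

lemma Zs_pos: "m > 0 \<Longrightarrow> Zs m h x > 0"
  unfolding Zs_def by (rule sum_pos) (auto simp: cells_ne)

lemma term_le_Zs: "i \<in> cells m \<Longrightarrow> exp (h * real (x i)) \<le> Zs m h x"
  unfolding Zs_def by (rule member_le_sum) auto

lemma Zs_upd: assumes "i \<in> cells m"
  shows "Zs m h (x(i := v)) = Zs m h x + (exp (h * real v) - exp (h * real (x i)))"
proof -
  have "Zs m h (x(i := v)) = (\<Sum>j\<in>cells m. exp (h * real (x j)) + (if j = i then exp (h * real v) - exp (h * real (x i)) else 0))"
    unfolding Zs_def by (rule sum.cong) auto
  also have "\<dots> = Zs m h x + (exp (h * real v) - exp (h * real (x i)))"
    unfolding Zs_def using assms by (simp add: sum.distrib)
  finally show ?thesis .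
qed

lemma supn_props: assumes "m > 0"
  shows "\<exists>i0\<in>cells m. x i0 = supn m x" "\<And>i. i \<in> cells m \<Longrightarrow> x i \<le> supn m x"
proof -
  have "Max (x ` cells m) \<in> x ` cells m" by (rule Max_in) (auto simp: cells_ne[OF assms])
  then show "\<exists>i0\<in>cells m. x i0 = supn m x" unfolding supn_def by auto
  show "\<And>i. i \<in> cells m \<Longrightarrow> x i \<le> supn m x" unfolding supn_def by (rule Max_ge) auto
qed

lemma U_ge: assumes "m > 0" "h > 0" shows "real (supn m x) \<le> Us m h x"
proof -
  obtain i0 where i0: "i0 \<in> cells m" "x i0 = supn m x" using supn_props[OF assms(1)] by blast
  have "exp (h * real (supn m x)) \<le> Zs m h x" using term_le_Zs[OF i0(1), of h x] i0 by simp
  then have "ln (exp (h * real (supn m x))) \<le> ln (Zs m h x)" by (subst ln_le_cancel_iff) (auto simp: Zs_pos assms)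
  then have "h * real (supn m x) \<le> ln (Zs m h x)" by simp
  then show ?thesis unfolding Us_def using assms by (simp add: le_divide_eq mult.commute)
qed

lemma U_le: assumes "m > 0" "h > 0" shows "Us m h x \<le> real (supn m x) + ln (real (card (cells m))) / h"
proof -
  have "Zs m h x \<le> real (card (cells m)) * exp (h * real (supn m x))"
    unfolding Zs_def
  proof (rule sum_bounded_above)
    fix i assume "i \<in> cells m"
    then have "real (x i) \<le> real (supn m x)" using supn_props(2)[OF assms(1)] by simp
    then show "exp (h * real (x i)) \<le> exp (h * real (supn m x))" using assms(2) by simp
  qed
  moreover have cpos: "real (card (cells m)) > 0" using assms by (simp add: card_cells)
  ultimately have "ln (Zs m h x) \<le> ln (real (card (cells m)) * exp (h * real (supn m x)))"
    by (subst ln_le_cancel_iff) (use Zs_pos[OF assms(1)] in \<open>auto intro: mult_pos_pos\<close>)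
  also have "\<dots> = ln (real (card (cells m))) + h * real (supn m x)" using cpos cells_ne[OF assms(1)] by (simp add: ln_mult)
  finally have "ln (Zs m h x) \<le> ln (real (card (cells m))) + h * real (supn m x)" .
  then have "ln (Zs m h x) / h \<le> (ln (real (card (cells m))) + h * real (supn m x)) / h"
    by (rule divide_right_mono) (use assms in auto)
  also have "\<dots> = real (supn m x) + ln (real (card (cells m))) / h" using assms by (simp add: field_simps)
  finally show ?thesis unfolding Us_def .
qed

lemma exp_bounds: fixes h :: real assumes "h > 0"
  shows "exp h - 1 \<le> h * exp h" "h * exp (- h) \<le> 1 - exp (- h)"
proof -
  have "1 - h \<le> exp (- h)" using exp_ge_add_one_self[of "-h"] by simp
  then have "(1 - h) * exp h \<le> exp (- h) * exp h" by (intro mult_right_mono) auto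
  then show "exp h - 1 \<le> h * exp h" by (simp add: algebra_simps flip: exp_add)
  have "1 + h \<le> exp h" using exp_ge_add_one_self[of h] by simp
  then have "(1 + h) * exp (- h) \<le> exp h * exp (- h)" by (intro mult_right_mono) auto
  then show "h * exp (- h) \<le> 1 - exp (- h)" by (simp add: algebra_simps flip: exp_add)
qed

lemma U_up: assumes m: "m > 0" and h: "h > 0" and i: "i \<in> cells m"
  shows "0 \<le> Us m h (x(i := x i + 1)) - Us m h x"
    "Us m h (x(i := x i + 1)) - Us m h x \<le> 1"
    "Us m h (x(i := x i + 1)) - Us m h x \<le> (exp h - 1) / h * (exp (h * real (x i)) / Zs m h x)"
proof -
  define E where "E = exp (h * real (x i))"
  define Z where "Z = Zs m h x"
  have Z: "Z > 0" unfolding Z_def using Zs_pos[OF m] .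
  have E: "E > 0" "E \<le> Z" unfolding E_def Z_def using term_le_Zs[OF i] by auto
  have eh: "exp h \<ge> 1" using h by simp
  have Z': "Zs m h (x(i := x i + 1)) = Z + E * (exp h - 1)"
    unfolding Zs_upd[OF i] E_def Z_def by (simp add: algebra_simps exp_add)
  have d: "Us m h (x(i := x i + 1)) - Us m h x = ln ((Z + E * (exp h - 1)) / Z) / h"
  proof -
    have pz: "Z + E * (exp h - 1) > 0" using Z E eh by (simp add: add_pos_nonneg)
    have "ln ((Z + E * (exp h - 1)) / Z) = ln (Z + E * (exp h - 1)) - ln Z" using pz Z by (simp add: ln_div)
    then show ?thesis unfolding Us_def Z' Z_def[symmetric] by (simp add: diff_divide_distrib)
  qed
  have q1: "(Z + E * (exp h - 1)) / Z \<ge> 1" using Z E eh by (simp add: field_simps)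
  show "0 \<le> Us m h (x(i := x i + 1)) - Us m h x" unfolding d using q1 h by simp
  have q2: "(Z + E * (exp h - 1)) / Z \<le> exp h"
  proof -
    have "E * (exp h - 1) \<le> Z * (exp h - 1)" using E eh by (intro mult_right_mono) auto
    then show ?thesis using Z by (simp add: field_simps)
  qed
  have "ln ((Z + E * (exp h - 1)) / Z) \<le> ln (exp h)"
    using q1 q2 by (subst ln_le_cancel_iff) auto
  then show "Us m h (x(i := x i + 1)) - Us m h x \<le> 1" unfolding d using h by (simp add: divide_le_eq)
  have "ln ((Z + E * (exp h - 1)) / Z) \<le> (Z + E * (exp h - 1)) / Z - 1"
    using q1 by (intro ln_le_minus_one) auto
  also have "\<dots> = (exp h - 1) * (E / Z)" using Z by (simp add: field_simps)
  finally have L: "ln ((Z + E * (exp h - 1)) / Z) \<le> (exp h - 1) * (E / Z)" .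
  have "ln ((Z + E * (exp h - 1)) / Z) / h \<le> (exp h - 1) * (E / Z) / h"
    by (rule divide_right_mono[OF L]) (use h in auto)
  then show "Us m h (x(i := x i + 1)) - Us m h x \<le> (exp h - 1) / h * (exp (h * real (x i)) / Zs m h x)"
    unfolding d E_def[symmetric] Z_def[symmetric] by (simp add: ac_simps)
qed

lemma U_up_sum: assumes m: "m > 0" and h: "h > 0"
  shows "(\<Sum>i\<in>cells m. Us m h (x(i := x i + 1)) - Us m h x) \<le> exp h"
proof -
  have "(\<Sum>i\<in>cells m. Us m h (x(i := x i + 1)) - Us m h x) \<le> (\<Sum>i\<in>cells m. (exp h - 1) / h * (exp (h * real (x i)) / Zs m h x))"
    by (intro sum_mono U_up(3)[OF m h])
  also have "\<dots> = (exp h - 1) / h * ((\<Sum>i\<in>cells m. exp (h * real (x i))) / Zs m h x)"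
    by (simp add: sum_distrib_left sum_divide_distrib)
  also have "\<dots> = (exp h - 1) / h" using Zs_pos[OF m, of h x] unfolding Zs_def by simp
  also have "\<dots> \<le> exp h" using exp_bounds(1)[OF h] h by (simp add: divide_le_eq mult.commute)
  finally show ?thesis .
qed

lemma U_down: assumes m: "m > 0" and h: "h > 0" and i: "i \<in> cells m" and xi: "x i \<ge> 1"
  shows "Us m h (x(i := x i - 1)) - Us m h x \<le> 0"
    "-1 \<le> Us m h (x(i := x i - 1)) - Us m h x"
    "Us m h (x(i := x i - 1)) - Us m h x \<le> - exp (- h) * (exp (h * real (x i)) / Zs m h x)"
proof -
  define E where "E = exp (h * real (x i))"
  define Z where "Z = Zs m h x"
  have Z: "Z > 0" unfolding Z_def using Zs_pos[OF m] .
  have E: "E > 0" "E \<le> Z" unfolding E_def Z_def using term_le_Zs[OF i] by auto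
  have eh: "exp (- h) \<le> 1" "exp (- h) > 0" using h by auto
  have Z': "Zs m h (x(i := x i - 1)) = Z - E * (1 - exp (- h))"
    unfolding Zs_upd[OF i] E_def Z_def using xi by (simp add: of_nat_diff algebra_simps flip: exp_add)
  have lo: "Z - E * (1 - exp (- h)) \<ge> exp (- h) * Z"
  proof -
    have "E * (1 - exp (- h)) \<le> Z * (1 - exp (- h))" using E eh by (intro mult_right_mono) auto
    then show ?thesis by (simp add: algebra_simps)
  qed
  have pos: "Z - E * (1 - exp (- h)) > 0" using lo Z eh by (smt (verit) mult_pos_pos)
  have d: "Us m h (x(i := x i - 1)) - Us m h x = ln ((Z - E * (1 - exp (- h))) / Z) / h"
  proof -
    have "ln ((Z - E * (1 - exp (- h))) / Z) = ln (Z - E * (1 - exp (- h))) - ln Z" using pos Z by (simp add: ln_div)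
    then show ?thesis unfolding Us_def Z' Z_def[symmetric] by (simp add: diff_divide_distrib)
  qed
  have q1: "(Z - E * (1 - exp (- h))) / Z \<le> 1" using Z E eh by (simp add: field_simps)
  have q0: "(Z - E * (1 - exp (- h))) / Z > 0" using Z pos by simp
  show "Us m h (x(i := x i - 1)) - Us m h x \<le> 0" unfolding d using q1 q0 h
    by (simp add: divide_le_0_iff)
  have q2: "(Z - E * (1 - exp (- h))) / Z \<ge> exp (- h)" using lo Z by (simp add: field_simps)
  have "ln (exp (- h)) \<le> ln ((Z - E * (1 - exp (- h))) / Z)"
    using q2 q0 by (subst ln_le_cancel_iff) auto
  then show "-1 \<le> Us m h (x(i := x i - 1)) - Us m h x" unfolding d using h by (simp add: le_divide_eq)
  have "ln ((Z - E * (1 - exp (- h))) / Z) \<le> (Z - E * (1 - exp (- h))) / Z - 1"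
    using q0 by (intro ln_le_minus_one) auto
  also have "\<dots> = - (1 - exp (- h)) * (E / Z)" using Z by (simp add: field_simps)
  also have "\<dots> \<le> - (h * exp (- h)) * (E / Z)"
    using exp_bounds(2)[OF h] E Z by (intro mult_right_mono) auto
  finally have "ln ((Z - E * (1 - exp (- h))) / Z) \<le> - (h * exp (- h)) * (E / Z)" .
  then show "Us m h (x(i := x i - 1)) - Us m h x \<le> - exp (- h) * (exp (h * real (x i)) / Zs m h x)"
    unfolding d E_def[symmetric] Z_def[symmetric] using h by (simp add: divide_le_eq field_simps)
qed




lemma ln_lower: fixes u :: real assumes "u \<ge> 0" shows "u / (1 + u) \<le> ln (1 + u)"
proof -
  have p: "1 / (1 + u) > 0" using assms by simp
  have "ln (1 / (1 + u)) \<le> 1 / (1 + u) - 1" by (rule ln_le_minus_one[OF p])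
  moreover have "ln (1 / (1 + u)) = - ln (1 + u)" using assms by (simp add: ln_div)
  moreover have "1 / (1 + u) - 1 = - (u / (1 + u))" using assms by (simp add: field_simps)
  ultimately show ?thesis by simp
qed

definition Isum :: "(real \<Rightarrow> real) \<Rightarrow> real \<Rightarrow> real \<Rightarrow> nat \<Rightarrow> state \<Rightarrow> idx \<Rightarrow> real" where
  "Isum l Q eps m x i = (\<Sum>j\<in>cells m. (real (x j) - (if j = i then 1 else 0)) * leps l Q eps i j)"

lemma drate_Isum: "drate l Q eps m N0 C L x i = C / L * real (x i) * log 2 (1 + 1 / (N0 + Isum l Q eps m x i))"
  unfolding drate_def Isum_def by simp

lemma Isum_nonneg: assumes "eps > 0" "bounded (l ` {0..})" "\<forall>u\<ge>0. l u \<ge> 0" "x i \<ge> 1"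
  shows "Isum l Q eps m x i \<ge> 0"
  unfolding Isum_def using assms leps_nonneg[OF assms(1-3)]
  by (intro sum_nonneg mult_nonneg_nonneg) auto

lemma drate_nonneg: assumes "eps > 0" "bounded (l ` {0..})" "\<forall>u\<ge>0. l u \<ge> 0" "N0 > 0" "C > 0" "L > 0"
  shows "drate l Q eps m N0 C L x i \<ge> 0"
proof (cases "x i = 0")
  case True then show ?thesis by (simp add: drate_Isum)
next
  case False
  have I: "Isum l Q eps m x i \<ge> 0" using Isum_nonneg[OF assms(1-3)] False by simp
  have "1 + 1 / (N0 + Isum l Q eps m x i) > 1" using I assms(4) by simp
  then have "log 2 (1 + 1 / (N0 + Isum l Q eps m x i)) > 0" by (subst zero_less_log_cancel_iff) (auto intro: add_pos_pos)
  then show ?thesis unfolding drate_Isum using assms by simp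
qed

lemma drate_lower:
  assumes eps: "eps > 0" and m: "real m * eps = 2 * Q" and bd: "bounded (l ` {0..})" and lnn: "\<forall>u\<ge>0. l u \<ge> 0"
    and N0: "N0 > 0" and C: "C > 0" and L: "L > 0" and mp: "m > 0" and i: "i \<in> cells m" and xi: "x i \<ge> 1"
  shows "drate l Q eps m N0 C L x i \<ge>
     C / (L * ln 2) * real (x i) / (N0 + real (supn m x) * (\<Sum>k\<in>cells m. leps l Q eps k (0, 0)) + 1)"
proof -
  define S where "S = (\<Sum>k\<in>cells m. leps l Q eps k (0, 0))"
  define I where "I = Isum l Q eps m x i"
  define M where "M = real (supn m x)"
  have I0: "I \<ge> 0" unfolding I_def using Isum_nonneg[where x=x and i=i, OF eps bd lnn xi] .
  have IM: "I \<le> M * S"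
  proof -
    have "I \<le> (\<Sum>j\<in>cells m. M * leps l Q eps i j)" unfolding I_def Isum_def
    proof (rule sum_mono)
      fix j assume j: "j \<in> cells m"
      have "real (x j) - (if j = i then 1 else 0) \<le> M"
        using supn_props(2)[OF mp j, of x] unfolding M_def by auto
      then show "(real (x j) - (if j = i then 1 else 0)) * leps l Q eps i j \<le> M * leps l Q eps i j"
        using leps_nonneg[OF eps bd lnn] by (intro mult_right_mono) auto
    qed
    also have "\<dots> = M * (\<Sum>j\<in>cells m. leps l Q eps i j)" by (simp add: sum_distrib_left)
    also have "\<dots> \<le> M * S" unfolding S_def M_def
      by (intro mult_left_mono leps_sum_le[OF eps m bd lnn i]) auto
    finally show ?thesis .
  qed
  have ln2: "ln (2::real) > 0" by simp
  have u0: "1 / (N0 + I) \<ge> 0" using N0 I0 by simp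
  have "1 / (N0 + M * S + 1) \<le> 1 / (N0 + I + 1)"
    using IM N0 I0 by (intro divide_left_mono) auto
  also have "1 / (N0 + I + 1) = (1 / (N0 + I)) / (1 + 1 / (N0 + I))"
    using N0 I0 by (simp add: field_simps)
  also have "\<dots> \<le> ln (1 + 1 / (N0 + I))" by (rule ln_lower[OF u0])
  finally have "1 / (N0 + M * S + 1) \<le> ln (1 + 1 / (N0 + I))" .
  then have "1 / (N0 + M * S + 1) / ln 2 \<le> log 2 (1 + 1 / (N0 + I))"
    unfolding log_def using ln2 by (intro divide_right_mono) auto
  then have "C / L * real (x i) * (1 / (N0 + M * S + 1) / ln 2) \<le> C / L * real (x i) * log 2 (1 + 1 / (N0 + I))"
    using C L by (intro mult_left_mono) auto
  then show ?thesis unfolding drate_Isum I_def[symmetric] S_def[symmetric] M_def[symmetric]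
    by (simp add: field_simps)
qed

lemma Zs_ge_sup: assumes "m > 0" "h > 0" shows "exp (h * real (supn m x)) \<le> Zs m h x"
proof -
  obtain i0 where i0: "i0 \<in> cells m" "x i0 = supn m x" using supn_props(1)[OF assms(1)] by blast
  show ?thesis using term_le_Zs[OF i0(1), of h x] i0 by simp
qed

lemma weighted:
  assumes eps: "eps > 0" and m: "real m * eps = 2 * Q" and bd: "bounded (l ` {0..})" and lnn: "\<forall>u\<ge>0. l u \<ge> 0"
    and N0: "N0 > 0" and C: "C > 0" and L: "L > 0" and mp: "m > 0" and h: "h > 0"
    and rho: "0 < rho" "rho < 1" and Mpos: "real (supn m x) > 0"
  shows "(\<Sum>i\<in>cells m. drate l Q eps m N0 C L x i * (exp (h * real (x i)) / Zs m h x)) \<ge>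
    (1 - real (card (cells m)) * exp (- h * rho * real (supn m x))) *
    (C / (L * ln 2) * ((1 - rho) * real (supn m x)) / (N0 + real (supn m x) * (\<Sum>k\<in>cells m. leps l Q eps k (0, 0)) + 1))"
proof -
  define M where "M = real (supn m x)"
  define S where "S = (\<Sum>k\<in>cells m. leps l Q eps k (0, 0))"
  define Z where "Z = Zs m h x"
  define p where "p i = exp (h * real (x i)) / Z" for i
  define J where "J = {i \<in> cells m. real (x i) \<ge> (1 - rho) * M}"
  define dmin where "dmin = C / (L * ln 2) * ((1 - rho) * M) / (N0 + M * S + 1)"
  have S0: "S \<ge> 0" unfolding S_def using leps_nonneg[OF eps bd lnn] by (intro sum_nonneg) auto
  have M0: "M > 0" using Mpos unfolding M_def .
  have Z: "Z > 0" unfolding Z_def using Zs_pos[OF mp] .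
  have p0: "p i \<ge> 0" for i unfolding p_def using Z by simp
  have dnn: "drate l Q eps m N0 C L x i \<ge> 0" for i using drate_nonneg[OF eps bd lnn N0 C L] .
  have MS: "M * S \<ge> 0" using M0 S0 by simp
  have dmin0: "dmin \<ge> 0" unfolding dmin_def using C L M0 rho MS N0 by (intro divide_nonneg_pos mult_nonneg_nonneg) auto
  have dJ: "drate l Q eps m N0 C L x i \<ge> dmin" if "i \<in> J" for i
  proof -
    have i: "i \<in> cells m" and xi: "real (x i) \<ge> (1 - rho) * M" using that unfolding J_def by auto
    have "(1 - rho) * M > 0" using rho M0 by simp
    then have "x i \<ge> 1" using xi by linarith
    then have "drate l Q eps m N0 C L x i \<ge> C / (L * ln 2) * real (x i) / (N0 + M * S + 1)"
      using drate_lower[OF eps m bd lnn N0 C L mp i] unfolding M_def S_def by blast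
    moreover have "C / (L * ln 2) * ((1 - rho) * M) / (N0 + M * S + 1) \<le> C / (L * ln 2) * real (x i) / (N0 + M * S + 1)"
      using xi C L M0 S0 N0 by (intro divide_right_mono mult_left_mono) auto
    ultimately show ?thesis unfolding dmin_def by linarith
  qed
  have sum1: "(\<Sum>i\<in>cells m. p i) = 1" unfolding p_def Z_def Zs_def using Zs_pos[OF mp, of h x]
    by (simp add: sum_divide_distrib[symmetric] Zs_def)
  have pout: "p i \<le> exp (- h * rho * M)" if "i \<in> cells m - J" for i
  proof -
    have "real (x i) < (1 - rho) * M" using that unfolding J_def by auto
    then have "exp (h * real (x i)) \<le> exp (h * ((1 - rho) * M))" using h by simp
    also have "\<dots> = exp (- h * rho * M) * exp (h * M)" by (simp add: algebra_simps flip: exp_add)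
    also have "\<dots> \<le> exp (- h * rho * M) * Z" unfolding Z_def M_def using Zs_ge_sup[OF mp h] by simp
    finally show ?thesis unfolding p_def using Z by (simp add: divide_le_eq)
  qed
  have JS: "J \<subseteq> cells m" unfolding J_def by auto
  have "(\<Sum>i\<in>cells m - J. p i) \<le> real (card (cells m - J)) * exp (- h * rho * M)"
    using pout by (intro sum_bounded_above) auto
  also have "\<dots> \<le> real (card (cells m)) * exp (- h * rho * M)"
    by (intro mult_right_mono) (auto intro: card_mono)
  finally have out: "(\<Sum>i\<in>cells m - J. p i) \<le> real (card (cells m)) * exp (- h * rho * M)" .
  have "(\<Sum>i\<in>J. p i) = 1 - (\<Sum>i\<in>cells m - J. p i)"
    using sum1 sum.subset_diff[OF JS finite_cells, of p] by simp
  then have pJ: "(\<Sum>i\<in>J. p i) \<ge> 1 - real (card (cells m)) * exp (- h * rho * M)" using out by simp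
  have "(\<Sum>i\<in>cells m. drate l Q eps m N0 C L x i * p i) \<ge> (\<Sum>i\<in>J. drate l Q eps m N0 C L x i * p i)"
    using JS dnn p0 by (intro sum_mono2) (auto intro: mult_nonneg_nonneg)
  moreover have "(\<Sum>i\<in>J. drate l Q eps m N0 C L x i * p i) \<ge> (\<Sum>i\<in>J. dmin * p i)"
    using dJ p0 by (intro sum_mono mult_right_mono) auto
  moreover have "(\<Sum>i\<in>J. dmin * p i) \<ge> (1 - real (card (cells m)) * exp (- h * rho * M)) * dmin"
    using pJ dmin0 by (simp add: sum_distrib_left[symmetric] mult.commute mult_left_mono)
  ultimately show ?thesis unfolding p_def Z_def dmin_def M_def S_def by linarith
qed

lemma drift:
  fixes b c r z0 h :: real and d :: "state \<Rightarrow> idx \<Rightarrow> real"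
  assumes mp: "m > 0" and h: "h > 0" and b: "b \<ge> 0" and dnn: "\<And>y i. d y i \<ge> 0"
    and d0: "\<And>y i. y i = 0 \<Longrightarrow> d y i = 0"
  shows "(\<Sum>i\<in>cells m. b * (ph h z0 (Us m h (x(i := x i + 1)) - c * r) - ph h z0 (Us m h x - c * r))
            + d x i * (ph h z0 (Us m h (x(i := x i - 1)) - c * r) - ph h z0 (Us m h x - c * r)))
     \<le> dph h z0 (Us m h x - c * r) * (b * exp (2 * h) - exp (- 2 * h) * (\<Sum>i\<in>cells m. d x i * (exp (h * real (x i)) / Zs m h x)))"
proof -
  define z where "z = Us m h x - c * r"
  define dd where "dd = dph h z0 z"
  define a where "a i = Us m h (x(i := x i + 1)) - Us m h x" for i
  define be where "be i = Us m h (x(i := x i - 1)) - Us m h x" for i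
  define p where "p i = exp (h * real (x i)) / Zs m h x" for i
  have dd0: "dd > 0" unfolding dd_def by (rule dph_pos)
  have tb: "b * (ph h z0 (Us m h (x(i := x i + 1)) - c * r) - ph h z0 (Us m h x - c * r)) \<le> b * exp h * dd * a i"
    if i: "i \<in> cells m" for i
  proof -
    have e: "Us m h (x(i := x i + 1)) - c * r = z + a i" unfolding z_def a_def by simp
    have a0: "0 \<le> a i" "a i \<le> 1" unfolding a_def using U_up[OF mp h i] by auto
    have "ph h z0 (z + a i) - ph h z0 z \<le> dph h z0 (z + a i) * a i" by (rule ph_convex[OF h])
    also have "\<dots> \<le> exp h * dd * a i" unfolding dd_def using dph_up[OF h a0(2)] a0(1) by (intro mult_right_mono) auto
    finally have "ph h z0 (z + a i) - ph h z0 z \<le> exp h * dd * a i" .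
    then show ?thesis unfolding e z_def[symmetric] using b by (simp add: mult_left_mono mult.assoc)
  qed
  have td: "d x i * (ph h z0 (Us m h (x(i := x i - 1)) - c * r) - ph h z0 (Us m h x - c * r)) \<le> - (exp (- 2 * h) * dd * (d x i * p i))"
    if i: "i \<in> cells m" for i
  proof (cases "x i = 0")
    case True then show ?thesis using d0[of x i] by simp
  next
    case False
    then have xi: "x i \<ge> 1" by simp
    have e: "Us m h (x(i := x i - 1)) - c * r = z + be i" unfolding z_def be_def by simp
    have bb: "be i \<le> 0" "-1 \<le> be i" "be i \<le> - exp (- h) * p i" unfolding be_def p_def using U_down[where x=x, OF mp h i xi] by auto
    have "ph h z0 (z + be i) - ph h z0 z \<le> dph h z0 (z + be i) * be i" by (rule ph_convex[OF h])
    also have "\<dots> \<le> exp (- h) * dd * be i" unfolding dd_def using dph_down[OF h bb(2)] bb(1) by (intro mult_right_mono_neg) auto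
    also have "\<dots> \<le> exp (- h) * dd * (- exp (- h) * p i)" using bb(3) dd0 by (intro mult_left_mono) auto
    also have "\<dots> = - (exp (- 2 * h) * dd * p i)" by (simp add: algebra_simps flip: exp_add)
    finally have "ph h z0 (z + be i) - ph h z0 z \<le> - (exp (- 2 * h) * dd * p i)" .
    then have "d x i * (ph h z0 (z + be i) - ph h z0 z) \<le> d x i * (- (exp (- 2 * h) * dd * p i))"
      using dnn[of x i] by (intro mult_left_mono) auto
    then show ?thesis unfolding e z_def[symmetric] by (simp add: algebra_simps)
  qed
  have "(\<Sum>i\<in>cells m. b * (ph h z0 (Us m h (x(i := x i + 1)) - c * r) - ph h z0 (Us m h x - c * r))
            + d x i * (ph h z0 (Us m h (x(i := x i - 1)) - c * r) - ph h z0 (Us m h x - c * r)))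
     \<le> (\<Sum>i\<in>cells m. b * exp h * dd * a i + - (exp (- 2 * h) * dd * (d x i * p i)))"
    by (intro sum_mono add_mono tb td)
  also have "\<dots> = b * exp h * dd * (\<Sum>i\<in>cells m. a i) - exp (- 2 * h) * dd * (\<Sum>i\<in>cells m. d x i * p i)"
    by (simp add: sum_subtractf sum_distrib_left)
  also have "\<dots> \<le> b * exp h * dd * exp h - exp (- 2 * h) * dd * (\<Sum>i\<in>cells m. d x i * p i)"
    using U_up_sum[OF mp h, of x] b dd0 unfolding a_def by (simp add: mult_left_mono)
  also have "\<dots> = dd * (b * exp (2 * h) - exp (- 2 * h) * (\<Sum>i\<in>cells m. d x i * p i))"
    by (simp add: algebra_simps flip: exp_add)
  finally show ?thesis unfolding dd_def z_def p_def .
qed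



lemma bern4: fixes r :: real assumes "0 \<le> r" "r \<le> 1/2" shows "1 - 4 * r \<le> (1 - r) ^ 4"
proof -
  have a: "1 - 2 * r \<le> (1 - r)^2" by (simp add: power2_eq_square algebra_simps)
  have b: "0 \<le> 1 - 2 * r" using assms by simp
  have "(1 - 2 * r)^2 \<le> ((1 - r)^2)^2" using a b by (intro power_mono) auto
  moreover have "1 - 4 * r \<le> (1 - 2 * r)^2" by (simp add: power2_eq_square algebra_simps)
  ultimately show ?thesis by (simp add: power_mult[symmetric])
qed

theorem mainTheorem11:
  fixes Q eps lam N0 C L :: real and m :: nat and l :: "real \<Rightarrow> real"
  assumes "Q > 0" "eps > 0" "m > 0" "real m * eps = 2 * Q"
    and "bounded (l ` {0..})" "\<forall>u v. 0 \<le> u \<longrightarrow> u \<le> v \<longrightarrow> l v \<le> l u"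
    and "\<forall>u \<ge> 0. l u \<ge> 0" "l 0 = 1"
    and "N0 > 0" "C > 0" "L > 0" "lam > 0"
    and "lam < C / (L * ln 2 * eps ^ 2 * (\<Sum>k\<in>cells m. leps l Q eps k (0, 0)))"
  shows "let \<tau> = 1 / (C / (L * ln 2 * (\<Sum>k\<in>cells m. leps l Q eps k (0, 0))) - lam * eps ^ 2)
         in \<forall>e > 0. \<exists>R. \<forall>x :: state. (\<forall>i. i \<notin> cells m \<longrightarrow> x i = 0) \<and> real (supn m x) \<ge> R \<longrightarrow>
              expect (cells m) (lam * eps ^ 2) (drate l Q eps m N0 C L) (real (supn m x) * \<tau>) x
                     (\<lambda>y. ennreal (real (supn m y)))
              \<le> ennreal (e * real (supn m x))"
proof -
  note eps = assms(2) and mq = assms(4) and bd = assms(5) and lnn = assms(7) and l0 = assms(8)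
    and N0 = assms(9) and C = assms(10) and L = assms(11) and lam = assms(12) and mp = assms(3)
  define S where "S = (\<Sum>k\<in>cells m. leps l Q eps k (0, 0))"
  define A where "A = C / (L * ln 2 * S)"
  define b where "b = lam * eps ^ 2"
  define \<kappa> where "\<kappa> = A - b"
  have ln2: "ln (2::real) > 0" by simp
  have S1: "S \<ge> 1"
  proof -
    have c0: "(0::nat, 0::nat) \<in> cells m" using mp by (simp add: cells_def)
    have "(0::real, 0::real) \<in> cell eps (0, 0)" using eps by (simp add: mem_cell)
    then have "l (tdist Q (0, 0) (0, 0)) \<le> leps l Q eps (0, 0) (0, 0)" by (intro leps_ge[OF bd])
    then have "1 \<le> leps l Q eps (0, 0) (0, 0)" using l0 by (simp add: tdist_self)
    also have "\<dots> \<le> S" unfolding S_def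
      by (rule member_le_sum[OF c0]) (auto simp: leps_nonneg[OF eps bd lnn])
    finally show ?thesis .
  qed
  have b0: "b > 0" unfolding b_def using lam eps by simp
  have A0: "A > 0" unfolding A_def using C L S1 ln2 by simp
  have kap: "\<kappa> > 0"
  proof -
    have "C / (L * ln 2 * eps ^ 2 * S) = A / eps ^ 2" unfolding A_def by (simp add: field_simps)
    then have "lam < A / eps ^ 2" using assms(13) unfolding S_def by simp
    then have "lam * eps ^ 2 < A" using eps by (simp add: less_divide_eq)
    then show ?thesis unfolding \<kappa>_def b_def by simp
  qed
  have tau: "1 / (C / (L * ln 2 * S) - lam * eps ^ 2) = 1 / \<kappa>"
    unfolding \<kappa>_def A_def b_def by simp
  show ?thesis
    unfolding Let_def S_def[symmetric] tau
  proof (intro allI impI)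
    fix e :: real assume e: "e > 0"
    show "\<exists>R. \<forall>x :: state. (\<forall>i. i \<notin> cells m \<longrightarrow> x i = 0) \<and> real (supn m x) \<ge> R \<longrightarrow>
              expect (cells m) (lam * eps ^ 2) (drate l Q eps m N0 C L) (real (supn m x) * (1 / \<kappa>)) x
                     (\<lambda>y. ennreal (real (supn m y)))
              \<le> ennreal (e * real (supn m x))"
      (is "\<exists>R. \<forall>x. ?P R x")
    proof -
    define \<delta> where "\<delta> = min (e/3) (1/2)"
    define c where "c = (1 - \<delta>) * \<kappa>"
    define \<gamma> where "\<gamma> = e * \<kappa> / 3"
    define \<rho> where "\<rho> = min (1/2) (\<delta> * \<kappa> / (b + 4 * A))"
    define h where "h = ln (1 + \<rho>) / 2"
    define n where "n = real (card (cells m))"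
    define M1 where "M1 = max 1 (max (ln (n / \<rho>) / (h * \<rho>)) ((N0 + 1) / (\<rho> * S)))"
    define R1 where "R1 = M1 + ln n / h"
    define K where "K = b * exp (2 * h) + c"
    define z0 where "z0 = R1 + \<bar>ln (K / \<gamma>)\<bar> / h"
    define R where "R = 3 * (z0 + (ln n + ln 2) / h) / e"
    define w where "w r y = z0 + ph h z0 (Us m h y - c * r) + \<gamma> * r" for r y
    define w' where "w' r y = - c * dph h z0 (Us m h y - c * r) + \<gamma>" for r y
    define d where "d = drate l Q eps m N0 C L"
    have \<delta>: "0 < \<delta>" "\<delta> \<le> 1/2" "\<delta> \<le> e/3" unfolding \<delta>_def using e by auto
    have c0: "c \<ge> 0" unfolding c_def using \<delta> kap by simp
    have \<gamma>0: "\<gamma> > 0" unfolding \<gamma>_def using e kap by simp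
    have bA: "b + 4 * A > 0" using b0 A0 by simp
    have \<rho>: "0 < \<rho>" "\<rho> \<le> 1/2" "\<rho> * (b + 4 * A) \<le> \<delta> * \<kappa>"
    proof -
      show "0 < \<rho>" unfolding \<rho>_def using \<delta> kap bA by simp
      show "\<rho> \<le> 1/2" unfolding \<rho>_def by (rule min.cobounded1)
      have "\<rho> \<le> \<delta> * \<kappa> / (b + 4 * A)" unfolding \<rho>_def by simp
      then show "\<rho> * (b + 4 * A) \<le> \<delta> * \<kappa>" using bA by (simp add: le_divide_eq)
    qed
    have h0: "h > 0" unfolding h_def using \<rho> by simp
    have e2h: "exp (2 * h) = 1 + \<rho>" unfolding h_def using \<rho> by simp
    have em2h: "exp (- 2 * h) = 1 / (1 + \<rho>)" using e2h by (simp add: exp_minus field_simps)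
    have n1: "n \<ge> 1"
    proof -
      have "1 \<le> m * m" using mp by (simp add: Suc_le_eq)
      then show ?thesis unfolding n_def card_cells by (metis of_nat_1 of_nat_le_iff)
    qed
    have lnn0: "ln n \<ge> 0" using n1 by simp
    have M1: "M1 \<ge> 1" unfolding M1_def by simp
    have K0: "K > 0" unfolding K_def using b0 c0 by (simp add: add_pos_nonneg)
    have lnh: "ln n / h \<ge> 0" using lnn0 h0 by simp
    have R1: "R1 \<ge> 1" unfolding R1_def using M1 lnh by linarith
    have z00: "z0 \<ge> 0" unfolding z0_def using R1 h0 by (simp add: add_nonneg_nonneg)
    have dnn: "\<And>y i. d y i \<ge> 0" unfolding d_def by (rule drate_nonneg[OF eps bd lnn N0 C L])
    have d0: "\<And>y i. y i = 0 \<Longrightarrow> d y i = 0" unfolding d_def by (simp add: drate_Isum)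
    have CA: "C / (L * ln 2) = A * S" unfolding A_def using S1 by simp
    have supI: "(\<Sum>i\<in>cells m. b * w r (y(i := y i + 1)) + d y i * w r (y(i := y i - 1)))
                 - (\<Sum>i\<in>cells m. b + d y i) * w r y \<le> w' r y" if r: "r \<ge> 0" for y r
    proof -
      define z where "z = Us m h y - c * r"
      define dd where "dd = dph h z0 z"
      define W where "W = (\<Sum>i\<in>cells m. d y i * (exp (h * real (y i)) / Zs m h y))"
      have dd0: "dd > 0" unfolding dd_def by (rule dph_pos)
      have W0: "W \<ge> 0" unfolding W_def using dnn Zs_pos[OF mp]
        by (intro sum_nonneg mult_nonneg_nonneg) (auto intro: less_imp_le)
      have "(\<Sum>i\<in>cells m. b * w r (y(i := y i + 1)) + d y i * w r (y(i := y i - 1)))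
                 - (\<Sum>i\<in>cells m. b + d y i) * w r y
          = (\<Sum>i\<in>cells m. b * w r (y(i := y i + 1)) + d y i * w r (y(i := y i - 1)) - (b + d y i) * w r y)"
        by (simp add: sum_subtractf sum_distrib_right)
      also have "\<dots> = (\<Sum>i\<in>cells m. b * (ph h z0 (Us m h (y(i := y i + 1)) - c * r) - ph h z0 (Us m h y - c * r))
            + d y i * (ph h z0 (Us m h (y(i := y i - 1)) - c * r) - ph h z0 (Us m h y - c * r)))"
        unfolding w_def by (rule sum.cong) (simp_all add: algebra_simps)
      also have "\<dots> \<le> dd * (b * exp (2 * h) - exp (- 2 * h) * W)"
        unfolding dd_def z_def W_def by (rule drift[OF mp h0 less_imp_le[OF b0] dnn d0])
      also have "\<dots> \<le> - c * dd + \<gamma>"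
      proof (cases "real (supn m y) \<ge> M1")
        case True
        define M where "M = real (supn m y)"
        have M: "M \<ge> M1" "M > 0" using True M1 unfolding M_def by auto
        have Wl: "W \<ge> (1 - n * exp (- h * \<rho> * M)) * (C / (L * ln 2) * ((1 - \<rho>) * M) / (N0 + M * S + 1))"
          unfolding W_def n_def M_def S_def d_def
          by (rule weighted[OF eps mq bd lnn N0 C L mp h0]) (use \<rho> M in \<open>auto simp: M_def\<close>)
        have ne: "n * exp (- h * \<rho> * M) \<le> \<rho>"
        proof -
          have "ln (n / \<rho>) / (h * \<rho>) \<le> M" using M(1) unfolding M1_def by simp
          then have "ln (n / \<rho>) \<le> h * \<rho> * M" using h0 \<rho> by (simp add: divide_le_eq mult.commute)
          then have "exp (ln (n / \<rho>)) \<le> exp (h * \<rho> * M)" by simp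
          moreover have "exp (ln (n / \<rho>)) = n / \<rho>" using n1 \<rho> by simp
          ultimately have "n / \<rho> \<le> exp (h * \<rho> * M)" by simp
          then have "n \<le> \<rho> * exp (h * \<rho> * M)" using \<rho> by (simp add: divide_le_eq mult.commute)
          then show ?thesis by (simp add: exp_minus field_simps)
        qed
        have fr: "M * S / (N0 + M * S + 1) \<ge> 1 - \<rho>"
        proof -
          have "(N0 + 1) / (\<rho> * S) \<le> M" using M(1) unfolding M1_def by simp
          then have "N0 + 1 \<le> \<rho> * S * M" using \<rho> S1 by (simp add: divide_le_eq mult.commute)
          then have "(1 - \<rho>) * (N0 + M * S + 1) \<le> M * S" using \<rho> N0 by (simp add: algebra_simps) (smt (verit) mult_nonneg_nonneg)
          then show ?thesis using N0 M S1 by (simp add: le_divide_eq add_pos_nonneg)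
        qed
        have Y: "C / (L * ln 2) * ((1 - \<rho>) * M) / (N0 + M * S + 1) = A * (1 - \<rho>) * (M * S / (N0 + M * S + 1))"
          unfolding CA by (simp add: field_simps)
        have Y2: "A * (1 - \<rho>) * (M * S / (N0 + M * S + 1)) \<ge> A * (1 - \<rho>) * (1 - \<rho>)"
          using fr A0 \<rho> by (intro mult_left_mono) auto
        have W3: "W \<ge> (1 - \<rho>) * (A * (1 - \<rho>) * (1 - \<rho>))"
        proof -
          have "(1 - \<rho>) * (A * (1 - \<rho>) * (1 - \<rho>)) \<le> (1 - n * exp (- h * \<rho> * M)) * (A * (1 - \<rho>) * (M * S / (N0 + M * S + 1)))"
          proof (rule mult_mono[OF _ Y2])
            show "1 - \<rho> \<le> 1 - n * exp (- h * \<rho> * M)" using ne by simp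
            show "0 \<le> 1 - n * exp (- h * \<rho> * M)" using ne \<rho> by simp
            show "0 \<le> A * (1 - \<rho>) * (1 - \<rho>)" using A0 \<rho> by simp
          qed
          moreover have "W \<ge> (1 - n * exp (- h * \<rho> * M)) * (A * (1 - \<rho>) * (M * S / (N0 + M * S + 1)))"
            using Wl unfolding Y .
          ultimately show ?thesis by linarith
        qed
        have "exp (- 2 * h) * W \<ge> (1 - \<rho>) * ((1 - \<rho>) * (A * (1 - \<rho>) * (1 - \<rho>)))"
        proof (rule mult_mono)
          show "1 - \<rho> \<le> exp (- 2 * h)" unfolding em2h using \<rho> by (simp add: field_simps)
        qed (use W3 W0 \<rho> A0 in \<open>auto intro!: mult_nonneg_nonneg\<close>)
        moreover have "(1 - \<rho>) * ((1 - \<rho>) * (A * (1 - \<rho>) * (1 - \<rho>))) = A * (1 - \<rho>) ^ 4"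
          by (simp add: power4_eq_xxxx algebra_simps)
        moreover have "A * (1 - \<rho>) ^ 4 \<ge> A * (1 - 4 * \<rho>)" using bern4[of \<rho>] \<rho> A0 by (intro mult_left_mono) auto
        ultimately have "exp (- 2 * h) * W \<ge> A * (1 - 4 * \<rho>)" by linarith
        then have "b * exp (2 * h) - exp (- 2 * h) * W \<le> b * (1 + \<rho>) - A * (1 - 4 * \<rho>)" unfolding e2h by simp
        also have "\<dots> = - \<kappa> + \<rho> * (b + 4 * A)" unfolding \<kappa>_def by (simp add: algebra_simps)
        also have "\<dots> \<le> - c" unfolding c_def using \<rho> by (simp add: algebra_simps)
        finally have "b * exp (2 * h) - exp (- 2 * h) * W \<le> - c" .
        then have "dd * (b * exp (2 * h) - exp (- 2 * h) * W) \<le> dd * (- c)" using dd0 by (intro mult_left_mono) auto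
        then show ?thesis using \<gamma>0 by (simp add: algebra_simps)
      next
        case False
        have "z \<le> Us m h y" unfolding z_def using c0 r by simp
        also have "\<dots> \<le> real (supn m y) + ln n / h" unfolding n_def by (rule U_le[OF mp h0])
        also have "\<dots> \<le> R1" unfolding R1_def using False by simp
        finally have zR: "z \<le> R1" .
        have "dd \<le> exp (h * (z - z0))" unfolding dd_def by (rule dph_le_exp)
        also have "\<dots> \<le> exp (h * (R1 - z0))" using zR h0 by simp
        also have "h * (R1 - z0) = - \<bar>ln (K / \<gamma>)\<bar>" unfolding z0_def using h0 by (simp add: field_simps)
        also have "exp (- \<bar>ln (K / \<gamma>)\<bar>) \<le> exp (- ln (K / \<gamma>))" by simp
        also have "\<dots> = \<gamma> / K" using K0 \<gamma>0 by (simp add: exp_minus)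
        finally have ddK: "dd * K \<le> \<gamma>" using K0 by (simp add: le_divide_eq)
        have "dd * (b * exp (2 * h) - exp (- 2 * h) * W) \<le> dd * (b * exp (2 * h))"
          using dd0 W0 by (intro mult_left_mono) auto
        then show ?thesis using ddK unfolding K_def by (simp add: algebra_simps)
      qed
      also have "\<dots> = w' r y" unfolding w'_def dd_def z_def by simp
      finally show ?thesis .
    qed
    have dn': "\<And>x i. i \<in> cells m \<Longrightarrow> d x i \<ge> 0" using dnn by blast
    have der: "((\<lambda>r. w r y) has_real_derivative w' r y) (at r)" for y r
    proof -
      have i: "((\<lambda>r. Us m h y - c * r) has_real_derivative - c) (at r)" by (auto intro!: derivative_eq_intros)
      have "((\<lambda>r. ph h z0 (Us m h y - c * r)) has_real_derivative dph h z0 (Us m h y - c * r) * - c) (at r)"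
        by (rule DERIV_chain2[OF ph_deriv[OF h0] i])
      then have "((\<lambda>r. z0 + ph h z0 (Us m h y - c * r) + \<gamma> * r) has_real_derivative
          0 + dph h z0 (Us m h y - c * r) * - c + \<gamma> * 1) (at r)"
        by (intro derivative_intros) auto
      then show ?thesis unfolding w_def w'_def by (simp add: algebra_simps)
    qed
    have cont: "isCont (\<lambda>r. w' r y) r" for y r
    proof -
      have "isCont (\<lambda>r. exp (h * (Us m h y - c * r - z0)) / (1 + exp (h * (Us m h y - c * r - z0)))) r"
      proof (intro continuous_intros)
        have "0 < 1 + exp (h * (Us m h y - c * r - z0))" by (intro add_pos_pos) auto
        then show "1 + exp (h * (Us m h y - c * r - z0)) \<noteq> 0" by linarith
      qed
      then show ?thesis unfolding w'_def dph_def by (rule continuous_add[OF continuous_mult[OF continuous_const] continuous_const])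
    qed
    have wpos: "\<And>y r. r \<ge> 0 \<Longrightarrow> w r y \<ge> 0"
      unfolding w_def using z00 ph_ge(2)[OF h0] \<gamma>0 by (simp add: add_nonneg_nonneg)
    have init: "\<And>y. real (supn m y) \<le> w 0 y"
    proof -
      fix y
      have "real (supn m y) \<le> Us m h y" by (rule U_ge[OF mp h0])
      also have "\<dots> \<le> z0 + ph h z0 (Us m h y - c * 0)"
      proof -
        have "ph h z0 (Us m h y) \<ge> Us m h y - z0" by (rule ph_ge(1)[OF h0])
        then show ?thesis by simp
      qed
      finally show "real (supn m y) \<le> w 0 y" unfolding w_def by simp
    qed
    show ?thesis
    proof (intro exI allI impI)
      fix x :: state assume "(\<forall>i. i \<notin> cells m \<longrightarrow> x i = 0) \<and> R \<le> real (supn m x)"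
      then have MR: "R \<le> real (supn m x)" by simp
      define M where "M = real (supn m x)"
      define t where "t = M * (1 / \<kappa>)"
      have M0: "M \<ge> 0" unfolding M_def by simp
      have t0: "t \<ge> 0" unfolding t_def using M0 kap by simp
      have "expect (cells m) b d t x (\<lambda>y. ennreal (real (supn m y))) \<le> ennreal (w t x)"
        by (rule comparison[OF finite_cells less_imp_le[OF b0] dn' der cont wpos init supI t0])
      also have "w t x \<le> e * M"
      proof -
        have ct: "c * t = (1 - \<delta>) * M" unfolding c_def t_def using kap by simp
        have gt: "\<gamma> * t = e * M / 3" unfolding \<gamma>_def t_def using kap by simp
        have U: "Us m h x \<le> M + ln n / h" unfolding M_def n_def by (rule U_le[OF mp h0])
        have dM0: "\<delta> * M \<le> e / 3 * M" using \<delta> M0 by (intro mult_right_mono) auto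
        have dM: "\<delta> * M \<le> e * M / 3" using dM0 by simp
        have "ph h z0 (Us m h x - c * t) \<le> max 0 (Us m h x - c * t - z0) + ln 2 / h" by (rule ph_le[OF h0])
        also have "max 0 (Us m h x - c * t - z0) \<le> \<delta> * M + ln n / h"
          using U ct z00 \<delta> M0 lnh by (simp add: algebra_simps)
        finally have p: "ph h z0 (Us m h x - c * t) \<le> \<delta> * M + ln n / h + ln 2 / h" by simp
        have RM: "3 * (z0 + (ln n + ln 2) / h) / e \<le> M" using MR unfolding R_def M_def .
        then have "z0 + (ln n + ln 2) / h \<le> e * M / 3" using e by (simp add: divide_le_eq mult.commute)
        then have zz: "z0 + ln n / h + ln 2 / h \<le> e * M / 3" by (simp add: add_divide_distrib)
        show ?thesis unfolding w_def using p gt dM zz by linarith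
      qed
      then have "ennreal (w t x) \<le> ennreal (e * M)" by (rule ennreal_leI)
      finally show "expect (cells m) (lam * eps ^ 2) (drate l Q eps m N0 C L) (real (supn m x) * (1 / \<kappa>)) x
                     (\<lambda>y. ennreal (real (supn m y)))
              \<le> ennreal (e * real (supn m x))"
        unfolding b_def d_def t_def M_def .
    qed
    qed
  qed
qed


end
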